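(* Let $X$ be a non-empty topological space. The following are equivalent: (1) $X$ is Baire; (2) \textsc{Alice} does not have a winning strategy in $\mathsf{BM}(X)$; (3) \textsc{Alice} does not have a winning strategy in $\mathsf{BM}_\mathrm{fin}(X)$; (4) \textsc{Alice} does not have a winning strategy in $\mathsf{BM}_\omega(X)$.
   Context: A Baire space is a space in which countable intersections of dense open sets are dense. The Banach–Mazur game $\mathsf{BM}(X)$: \textsc{Alice} and \textsc{Bob} alternately choose non-empty open sets $A_0\supseteq B_0\supseteq A_1\supseteq B_1\supseteq\cdots$, \textsc{Alice} starting; \textsc{Bob} wins if $\bigcap_n B_n\neq\emptyset$, otherwise \textsc{Alice} wins. The game $\mathsf{BM}_\mathrm{fin}(X)$: \textsc{Alice} plays a non-empty open set $A_0$; \textsc{Bob} plays a finite collection $\mathcal{B}_0$ of non-empty open subsets of $A_0$; in inning $n+1$, for each $B \in \mathcal{B}_n$ \textsc{Alice} plays a non-empty open set $A_B \subseteq B$, letting $\mathcal{A}_{n+1}=\{A_B : B\in\mathcal{B}_n\}$, and \textsc{Bob} plays a finite collection $\mathcal{B}_{n+1}$ of non-empty open subsets of $\bigcup\mathcal{A}_{n+1}$; \textsc{Bob} wins if $\bigcap_{n}\bigcup\mathcal{B}_n\neq\emptyset$, otherwise \textsc{Alice} wins. The game $\mathsf{BM}_\omega(X)$ is defined identically to $\mathsf{BM}_\mathrm{fin}(X)$ except that each collection $\mathcal{B}_n$ played by \textsc{Bob} is countable instead of finite. *)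

theory Defs
  imports "HOL-Analysis.Analysis"
begin

definition dense_in_top :: "'a topology \<Rightarrow> 'a set \<Rightarrow> bool" where
  "dense_in_top X S \<longleftrightarrow> X closure_of S = topspace X"

definition baire_space :: "'a topology \<Rightarrow> bool" where
  "baire_space X \<longleftrightarrow>
     (\<forall>U :: nat \<Rightarrow> 'a set. (\<forall>n. openin X (U n) \<and> dense_in_top X (U n))
        \<longrightarrow> dense_in_top X (\<Inter>n. U n))"

text \<open>A strategy of Alice in BM(X) maps the list [B_0,...,B_(n-1)] of Bob's previous
  moves to her next move A_n (her own earlier moves are determined by the strategy).\<close>

definition bm_legal_hist :: "'a topology \<Rightarrow> ('a set list \<Rightarrow> 'a set) \<Rightarrow> 'a set list \<Rightarrow> bool" where
  "bm_legal_hist X \<sigma> bs \<longleftrightarrow>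
     (\<forall>k < length bs. openin X (bs ! k) \<and> bs ! k \<noteq> {} \<and> bs ! k \<subseteq> \<sigma> (take k bs))"

definition bm_alice_strategy :: "'a topology \<Rightarrow> ('a set list \<Rightarrow> 'a set) \<Rightarrow> bool" where
  "bm_alice_strategy X \<sigma> \<longleftrightarrow>
     (\<forall>bs. bm_legal_hist X \<sigma> bs \<longrightarrow>
        openin X (\<sigma> bs) \<and> \<sigma> bs \<noteq> {} \<and> (bs \<noteq> [] \<longrightarrow> \<sigma> bs \<subseteq> last bs))"

definition bm_alice_winning :: "'a topology \<Rightarrow> ('a set list \<Rightarrow> 'a set) \<Rightarrow> bool" where
  "bm_alice_winning X \<sigma> \<longleftrightarrow> bm_alice_strategy X \<sigma> \<and>
     (\<forall>B :: nat \<Rightarrow> 'a set. (\<forall>n. bm_legal_hist X \<sigma> (map B [0..<n])) \<longrightarrow> (\<Inter>n. B n) = {})"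

definition alice_wins_BM :: "'a topology \<Rightarrow> bool" where
  "alice_wins_BM X \<longleftrightarrow> (\<exists>\<sigma>. bm_alice_winning X \<sigma>)"

text \<open>Alice's strategy consists of her
  first move A0 and a map \<sigma> sending the history [B_0,...,B_n] of Bob's collections and a
  set B \<in> B_n to her response A_B.  The collection A_k played by Alice in inning k is
  alice_moves A0 \<sigma> bs k.\<close>

definition alice_moves ::
  "'a set \<Rightarrow> ('a set set list \<Rightarrow> 'a set \<Rightarrow> 'a set) \<Rightarrow> 'a set set list \<Rightarrow> nat \<Rightarrow> 'a set set" where
  "alice_moves A0 \<sigma> bs k = (if k = 0 then {A0} else (\<sigma> (take k bs)) ` (bs ! (k - 1)))"

definition bmc_legal_hist ::
  "('a set set \<Rightarrow> bool) \<Rightarrow> 'a topology \<Rightarrow> 'a set \<Rightarrow> ('a set set list \<Rightarrow> 'a set \<Rightarrow> 'a set)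
     \<Rightarrow> 'a set set list \<Rightarrow> bool" where
  "bmc_legal_hist P X A0 \<sigma> bs \<longleftrightarrow>
     (\<forall>k < length bs. P (bs ! k) \<and> (\<forall>B \<in> bs ! k. openin X B \<and> B \<noteq> {}) \<and>
        \<Union>(bs ! k) \<subseteq> \<Union>(alice_moves A0 \<sigma> bs k))"

definition bmc_alice_strategy ::
  "('a set set \<Rightarrow> bool) \<Rightarrow> 'a topology \<Rightarrow> 'a set \<Rightarrow> ('a set set list \<Rightarrow> 'a set \<Rightarrow> 'a set) \<Rightarrow> bool" where
  "bmc_alice_strategy P X A0 \<sigma> \<longleftrightarrow> openin X A0 \<and> A0 \<noteq> {} \<and>
     (\<forall>bs. bs \<noteq> [] \<and> bmc_legal_hist P X A0 \<sigma> bs \<longrightarrow>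
        (\<forall>B \<in> last bs. openin X (\<sigma> bs B) \<and> \<sigma> bs B \<noteq> {} \<and> \<sigma> bs B \<subseteq> B))"

definition bmc_alice_winning ::
  "('a set set \<Rightarrow> bool) \<Rightarrow> 'a topology \<Rightarrow> 'a set \<Rightarrow> ('a set set list \<Rightarrow> 'a set \<Rightarrow> 'a set) \<Rightarrow> bool" where
  "bmc_alice_winning P X A0 \<sigma> \<longleftrightarrow> bmc_alice_strategy P X A0 \<sigma> \<and>
     (\<forall>Bs :: nat \<Rightarrow> 'a set set. (\<forall>n. bmc_legal_hist P X A0 \<sigma> (map Bs [0..<n]))
        \<longrightarrow> (\<Inter>n. \<Union>(Bs n)) = {})"

definition alice_wins_BM_fin :: "'a topology \<Rightarrow> bool" where
  "alice_wins_BM_fin X \<longleftrightarrow> (\<exists>A0 \<sigma>. bmc_alice_winning finite X A0 \<sigma>)"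

definition alice_wins_BM_omega :: "'a topology \<Rightarrow> bool" where
  "alice_wins_BM_omega X \<longleftrightarrow> (\<exists>A0 \<sigma>. bmc_alice_winning countable X A0 \<sigma>)"

end

theory Submission
  imports Defs
begin

lemma dense_meets:
  assumes "dense_in_top X D" "openin X B" "B \<noteq> {}"
  shows "B \<inter> D \<noteq> {}"
proof -
  obtain b where b: "b \<in> B" using assms(3) by blast
  have "b \<in> topspace X" using b assms(2) openin_subset by blast
  then have "b \<in> X closure_of D" using assms(1) unfolding dense_in_top_def by simp
  then show ?thesis using b assms(2) unfolding in_closure_of by blast
qed


lemma legal_fin_countable: "bmc_legal_hist finite X A0 \<sigma> bs \<Longrightarrow> bmc_legal_hist countable X A0 \<sigma> bs" 
    unfolding bmc_legal_hist_def by (simp add: countable_finite)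
lemma omega_to_fin:
  assumes "bmc_alice_winning countable X A0 \<sigma>"
  shows "bmc_alice_winning finite X A0 \<sigma>"
  using assms legal_fin_countable unfolding bmc_alice_winning_def bmc_alice_strategy_def
  by (smt (verit))

lemma fin_to_bm:
  assumes W: "bmc_alice_winning finite X A0 \<sigma>"
  shows "alice_wins_BM X"
proof -
  define sg where "sg = (\<lambda>B::'a set. {B})"
  define \<tau> where "\<tau> = (\<lambda>bs. if bs = [] then A0 else \<sigma> (map sg bs) (last bs))"
  have S: "bmc_alice_strategy finite X A0 \<sigma>" using W unfolding bmc_alice_winning_def by blast
  have leq: "bm_legal_hist X \<tau> bs \<longleftrightarrow> bmc_legal_hist finite X A0 \<sigma> (map sg bs)" for bs
  proof -
    have "(openin X (bs ! k) \<and> bs ! k \<noteq> {} \<and> bs ! k \<subseteq> \<tau> (take k bs)) \<longleftrightarrow>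
      (finite (map sg bs ! k) \<and> (\<forall>B \<in> map sg bs ! k. openin X B \<and> B \<noteq> {}) \<and>
        \<Union>(map sg bs ! k) \<subseteq> \<Union>(alice_moves A0 \<sigma> (map sg bs) k))" if k: "k < length bs" for k
    proof -
      have "\<Union>(alice_moves A0 \<sigma> (map sg bs) k) = \<tau> (take k bs)"
      proof (cases "k = 0")
        case True then show ?thesis by (simp add: alice_moves_def \<tau>_def)
      next
        case False
        then have "take k bs \<noteq> []" "last (take k bs) = bs ! (k-1)" using k
          by (cases k; simp add: take_Suc_conv_app_nth)+
        then show ?thesis using False k by (simp add: alice_moves_def \<tau>_def sg_def take_map)
      qed
      then show ?thesis using k by (simp add: sg_def)
    qed
    then show ?thesis unfolding bm_legal_hist_def bmc_legal_hist_def by simp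
  qed
  have st: "bm_alice_strategy X \<tau>"
    unfolding bm_alice_strategy_def
  proof (intro allI impI)
    fix bs assume l: "bm_legal_hist X \<tau> bs"
    show "openin X (\<tau> bs) \<and> \<tau> bs \<noteq> {} \<and> (bs \<noteq> [] \<longrightarrow> \<tau> bs \<subseteq> last bs)"
    proof (cases "bs = []")
      case True then show ?thesis using S by (simp add: \<tau>_def bmc_alice_strategy_def)
    next
      case False
      have "map sg bs \<noteq> []" "bmc_legal_hist finite X A0 \<sigma> (map sg bs)" using False l leq by auto
      moreover have "last bs \<in> last (map sg bs)" using False by (simp add: last_map sg_def)
      ultimately show ?thesis using S False unfolding bmc_alice_strategy_def \<tau>_def by auto
    qed
  qed
  have "bm_alice_winning X \<tau>"
    unfolding bm_alice_winning_def
  proof (intro conjI st allI impI)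
    fix B :: "nat \<Rightarrow> 'a set"
    assume "\<forall>n. bm_legal_hist X \<tau> (map B [0..<n])"
    then have "\<forall>n. bmc_legal_hist finite X A0 \<sigma> (map (\<lambda>n. {B n}) [0..<n])"
      using leq by (simp add: sg_def comp_def)
    then have "(\<Inter>n. \<Union>{B n}) = {}" using W unfolding bmc_alice_winning_def by blast
    then show "(\<Inter>n. B n) = {}" by simp
  qed
  then show ?thesis unfolding alice_wins_BM_def by blast
qed


lemma notbaire_to_omega:
  assumes "\<not> baire_space X"
  shows "alice_wins_BM_omega X"
proof -
  obtain D :: "nat \<Rightarrow> 'a set" where D: "\<And>n. openin X (D n)" "\<And>n. dense_in_top X (D n)"
    and nd: "\<not> dense_in_top X (\<Inter>n. D n)"
    using assms unfolding baire_space_def by metis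
  define U where "U = topspace X - X closure_of (\<Inter>n. D n)"
  have Uo: "openin X U" unfolding U_def by (simp add: openin_diff)
  have "X closure_of (\<Inter>n. D n) \<subseteq> topspace X" by (rule closure_of_subset_topspace)
  then have Un: "U \<noteq> {}" using nd unfolding U_def dense_in_top_def by auto
  have Ud: "U \<inter> (\<Inter>n. D n) = {}"
  proof -
    have "(\<Inter>n. D n) \<subseteq> topspace X" using D(1)[of 0] openin_subset by (meson INT_lower UNIV_I order_trans)
    then have "(\<Inter>n. D n) \<subseteq> X closure_of (\<Inter>n. D n)" by (rule closure_of_subset)
    then show ?thesis unfolding U_def by auto
  qed
  define \<sigma> where "\<sigma> = (\<lambda>(bs::'a set set list) (B::'a set). B \<inter> D (length bs - 1))"
  have "bmc_alice_winning countable X U \<sigma>"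
    unfolding bmc_alice_winning_def bmc_alice_strategy_def
  proof (intro conjI allI impI ballI)
    fix bs B assume h: "bs \<noteq> [] \<and> bmc_legal_hist countable X U \<sigma> bs" and B: "B \<in> last bs"
    then have "last bs = bs ! (length bs - 1)" "length bs - 1 < length bs"
      by (auto simp: last_conv_nth)
    moreover have "\<forall>k < length bs. (\<forall>B \<in> bs ! k. openin X B \<and> B \<noteq> {})"
      using h unfolding bmc_legal_hist_def by blast
    ultimately have "openin X B" "B \<noteq> {}" using B by auto
    then show "openin X (\<sigma> bs B)" "\<sigma> bs B \<noteq> {}" "\<sigma> bs B \<subseteq> B"
      using D dense_meets[of X "D (length bs - 1)" B] by (auto simp: \<sigma>_def openin_Int)
  next
    fix Bs :: "nat \<Rightarrow> 'a set set"
    assume l: "\<forall>n. bmc_legal_hist countable X U \<sigma> (map Bs [0..<n])"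
    show "(\<Inter>n. \<Union>(Bs n)) = {}"
    proof (rule ccontr)
      assume "(\<Inter>n. \<Union>(Bs n)) \<noteq> {}"
      then obtain x where x: "\<And>n. x \<in> \<Union>(Bs n)" by blast
      have "x \<in> U"
      proof -
        have "\<Union>(Bs 0) \<subseteq> \<Union>(alice_moves U \<sigma> (map Bs [0..<1]) 0)"
          using l[rule_format, of 1] unfolding bmc_legal_hist_def by auto
        then show ?thesis using x[of 0] by (auto simp: alice_moves_def)
      qed
      moreover have "x \<in> D n" for n
      proof -
        define bs where "bs = map Bs [0..<Suc (Suc n)]"
        have len: "length bs = Suc (Suc n)" unfolding bs_def by simp
        have n1: "bs ! Suc n = Bs (Suc n)" "bs ! n = Bs n" unfolding bs_def
          by (simp_all only: nth_map_upt) simp_all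
        have "\<forall>k < length bs. \<Union>(bs ! k) \<subseteq> \<Union>(alice_moves U \<sigma> bs k)"
          using l unfolding bs_def bmc_legal_hist_def by blast
        then have "\<Union>(bs ! Suc n) \<subseteq> \<Union>(alice_moves U \<sigma> bs (Suc n))" using len by simp
        also have "\<dots> \<subseteq> D n"
          using len by (auto simp: alice_moves_def \<sigma>_def)
        finally show ?thesis using x[of "Suc n"] n1 by blast
      qed
      ultimately show False using Ud by blast
    qed
  qed (use Uo Un in auto)
  then show ?thesis unfolding alice_wins_BM_omega_def by blast
qed


lemma legal_snoc:
  "bm_legal_hist X \<sigma> (p @ [V]) \<longleftrightarrow> bm_legal_hist X \<sigma> p \<and> openin X V \<and> V \<noteq> {} \<and> V \<subseteq> \<sigma> p"
  unfolding bm_legal_hist_def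
  by (auto simp: nth_append less_Suc_eq)

lemma baire_no_win:
  assumes B: "baire_space X" and W: "bm_alice_winning X \<sigma>"
  shows False
proof -
  let ?L = "bm_legal_hist X \<sigma>"
  have S: "\<And>p. ?L p \<Longrightarrow> openin X (\<sigma> p) \<and> \<sigma> p \<noteq> {} \<and> (p \<noteq> [] \<longrightarrow> \<sigma> p \<subseteq> last p)"
    using W unfolding bm_alice_winning_def bm_alice_strategy_def by blast
  have Wn: "\<And>Bf. (\<forall>n. ?L (map Bf [0..<n])) \<Longrightarrow> (\<Inter>n. Bf n) = {}"
    using W unfolding bm_alice_winning_def by blast
  define good where "good = (\<lambda>T F. (\<forall>q\<in>F. ?L q \<and> q \<noteq> [] \<and> butlast q \<in> T) \<and>
     (\<forall>q1\<in>F. \<forall>q2\<in>F. q1 \<noteq> q2 \<longrightarrow> \<sigma> q1 \<inter> \<sigma> q2 = {}) \<and>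
     (\<forall>p\<in>T. \<forall>V. openin X V \<and> V \<noteq> {} \<and> V \<subseteq> \<sigma> p \<longrightarrow> (\<exists>q\<in>F. \<sigma> q \<inter> V \<noteq> {})))"
  have ex: "\<exists>F. good T F" if TL: "\<forall>p\<in>T. ?L p" for T
  proof -
    define A where "A = {F. (\<forall>q\<in>F. ?L q \<and> q \<noteq> [] \<and> butlast q \<in> T) \<and>
       (\<forall>q1\<in>F. \<forall>q2\<in>F. q1 \<noteq> q2 \<longrightarrow> \<sigma> q1 \<inter> \<sigma> q2 = {})}"
    have "\<forall>C\<in>chains A. \<Union>C \<in> A"
    proof
      fix C assume C: "C \<in> chains A"
      show "\<Union>C \<in> A" unfolding A_def
      proof (rule CollectI, rule conjI; (intro ballI impI)?)
        fix q assume "q \<in> \<Union>C"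
        then show "?L q \<and> q \<noteq> [] \<and> butlast q \<in> T" using C unfolding chains_def A_def by blast
      next
        fix q1 q2 assume q1: "q1 \<in> \<Union>C" and q2: "q2 \<in> \<Union>C" and ne: "q1 \<noteq> q2"
        then obtain F1 F2 where "F1 \<in> C" "q1 \<in> F1" "F2 \<in> C" "q2 \<in> F2" by blast
        then have "\<exists>F\<in>A. q1 \<in> F \<and> q2 \<in> F"
          using C unfolding chains_def chain_subset_def by blast
        then show "\<sigma> q1 \<inter> \<sigma> q2 = {}" using ne unfolding A_def by blast
      qed
    qed
    then obtain M where M: "M \<in> A" and max: "\<forall>F\<in>A. M \<subseteq> F \<longrightarrow> F = M"
      using Zorn_Lemma by blast
    have "good T M" unfolding good_def
    proof (intro conjI)
      show "\<forall>q\<in>M. ?L q \<and> q \<noteq> [] \<and> butlast q \<in> T" using M unfolding A_def by blast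
      show "\<forall>q1\<in>M. \<forall>q2\<in>M. q1 \<noteq> q2 \<longrightarrow> \<sigma> q1 \<inter> \<sigma> q2 = {}" using M unfolding A_def by blast
      show "\<forall>p\<in>T. \<forall>V. openin X V \<and> V \<noteq> {} \<and> V \<subseteq> \<sigma> p \<longrightarrow> (\<exists>q\<in>M. \<sigma> q \<inter> V \<noteq> {})"
      proof (intro ballI allI impI)
        fix p V assume p: "p \<in> T" and V: "openin X V \<and> V \<noteq> {} \<and> V \<subseteq> \<sigma> p"
        show "\<exists>q\<in>M. \<sigma> q \<inter> V \<noteq> {}"
        proof (rule ccontr)
          assume nq: "\<not> (\<exists>q\<in>M. \<sigma> q \<inter> V \<noteq> {})"
          define q where "q = p @ [V]"
          have Lq: "?L q" unfolding q_def using legal_snoc TL p V by blast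
          then have Sq: "\<sigma> q \<noteq> {}" "\<sigma> q \<subseteq> V" using S[OF Lq] by (auto simp: q_def)
          have qM: "q \<notin> M" using nq Sq by blast
          have "insert q M \<in> A" unfolding A_def
          proof (rule CollectI, rule conjI; (intro ballI impI)?)
            fix r assume "r \<in> insert q M"
            then show "?L r \<and> r \<noteq> [] \<and> butlast r \<in> T"
              using M Lq p unfolding A_def by (auto simp: q_def)
          next
            fix q1 q2 assume "q1 \<in> insert q M" "q2 \<in> insert q M" "q1 \<noteq> q2"
            then show "\<sigma> q1 \<inter> \<sigma> q2 = {}" using M nq Sq unfolding A_def by blast
          qed
          then have "insert q M = M" using max by blast
          then show False using qM by blast
        qed
      qed
    qed
    then show ?thesis by blast
  qed
  define T where "T = rec_nat {[]} (\<lambda>n Tn. SOME F. good Tn F)"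
  have T0: "T 0 = {[]}" and TS: "\<And>n. T (Suc n) = (SOME F. good (T n) F)" by (simp_all add: T_def)
  have inv: "(\<forall>p\<in>T n. ?L p \<and> length p = n) \<and> (\<forall>q1\<in>T n. \<forall>q2\<in>T n. q1 \<noteq> q2 \<longrightarrow> \<sigma> q1 \<inter> \<sigma> q2 = {})" for n
  proof (induction n)
    case 0 show ?case by (simp add: T0 bm_legal_hist_def)
  next
    case (Suc n)
    then have "\<forall>p\<in>T n. ?L p" by blast
    then have "\<exists>F. good (T n) F" by (rule ex)
    then have "good (T n) (T (Suc n))" unfolding TS by (rule someI_ex)
    then have g: "\<forall>q\<in>T (Suc n). ?L q \<and> q \<noteq> [] \<and> butlast q \<in> T n"
      "\<forall>q1\<in>T (Suc n). \<forall>q2\<in>T (Suc n). q1 \<noteq> q2 \<longrightarrow> \<sigma> q1 \<inter> \<sigma> q2 = {}"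
      unfolding good_def by simp_all
    have "length q = Suc n" if q: "q \<in> T (Suc n)" for q
    proof -
      have "q \<noteq> []" "butlast q \<in> T n" using g(1) q by auto
      moreover have "\<forall>p\<in>T n. length p = n" using Suc by simp
      ultimately have "q \<noteq> []" "length (butlast q) = n" by auto
      then show ?thesis by (cases q rule: rev_cases) auto
    qed
    then show ?case using g by blast
  qed
  have gd: "good (T n) (T (Suc n))" for n
  proof -
    have "\<forall>p\<in>T n. ?L p" using inv[of n] by blast
    then have "\<exists>F. good (T n) F" by (rule ex)
    then show ?thesis unfolding TS by (rule someI_ex)
  qed
  have gd1: "\<forall>q\<in>T (Suc n). ?L q \<and> q \<noteq> [] \<and> butlast q \<in> T n" for n
    using gd[of n] unfolding good_def by simp
  have gd3: "\<forall>p\<in>T n. \<forall>V. openin X V \<and> V \<noteq> {} \<and> V \<subseteq> \<sigma> p \<longrightarrow> (\<exists>q\<in>T (Suc n). \<sigma> q \<inter> V \<noteq> {})" for n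
    using gd[of n] unfolding good_def by simp
  define Wf where "Wf n = \<Union>(\<sigma> ` T n)" for n
  have Wo: "openin X (Wf n)" for n
    unfolding Wf_def using S inv[of n] by (intro openin_Union) blast
  have Wd: "Wf n \<subseteq> X closure_of Wf (Suc n)" for n
  proof
    fix x assume "x \<in> Wf n"
    then obtain p where p: "p \<in> T n" "x \<in> \<sigma> p" unfolding Wf_def by blast
    have op: "openin X (\<sigma> p)" using S inv p by blast
    show "x \<in> X closure_of Wf (Suc n)" unfolding in_closure_of
    proof (intro conjI allI impI)
      show "x \<in> topspace X" using op p openin_subset by blast
      fix U assume U: "x \<in> U \<and> openin X U"
      have "openin X (U \<inter> \<sigma> p) \<and> U \<inter> \<sigma> p \<noteq> {} \<and> U \<inter> \<sigma> p \<subseteq> \<sigma> p" using U op p by auto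
      then obtain q where "q \<in> T (Suc n)" "\<sigma> q \<inter> (U \<inter> \<sigma> p) \<noteq> {}"
        using gd3[of n] p by blast
      then show "\<exists>y. y \<in> Wf (Suc n) \<and> y \<in> U" unfolding Wf_def by blast
    qed
  qed
  have A0: "openin X (\<sigma> [])" "\<sigma> [] \<noteq> {}" using S[of "[]"] by (auto simp: bm_legal_hist_def)
  have A0t: "\<sigma> [] \<subseteq> topspace X" using A0 openin_subset by blast
  have W0: "Wf 0 = \<sigma> []" by (simp add: Wf_def T0)
  have cl: "\<sigma> [] \<subseteq> X closure_of Wf n" for n
  proof (induction n)
    case 0 show ?case using W0 closure_of_subset A0t by metis
  next
    case (Suc n)
    have "X closure_of Wf n \<subseteq> X closure_of Wf (Suc n)" using closure_of_mono[where X=X, OF Wd[of n]] by simp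
    moreover have "Wf n \<subseteq> X closure_of Wf n" using Wo openin_subset closure_of_subset by metis
    ultimately show ?case using Suc by blast
  qed
  define C where "C = topspace X - X closure_of (\<sigma> [])"
  define D where "D n = Wf n \<union> C" for n
  have Dod: "openin X (D n) \<and> dense_in_top X (D n)" for n
  proof
    show "openin X (D n)" unfolding D_def C_def using Wo by (simp add: openin_Un openin_diff)
    have Dsub: "D n \<subseteq> topspace X" using Wo openin_subset unfolding D_def C_def by blast
    show "dense_in_top X (D n)" unfolding dense_in_top_def
    proof (rule antisym[OF closure_of_subset_topspace], rule subsetI)
      fix x assume x: "x \<in> topspace X"
      show "x \<in> X closure_of D n"
      proof (cases "x \<in> X closure_of \<sigma> []")
        case True
        have "X closure_of \<sigma> [] \<subseteq> X closure_of Wf n" using closure_of_mono[where X=X, OF cl[of n]] by simp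
        also have "\<dots> \<subseteq> X closure_of D n" by (rule closure_of_mono) (simp add: D_def)
        finally show ?thesis using True by blast
      next
        case False
        then have "x \<in> D n" using x by (simp add: D_def C_def)
        then show ?thesis using closure_of_subset[OF Dsub] by blast
      qed
    qed
  qed
  have dn: "dense_in_top X (\<Inter>n. D n)" using B Dod unfolding baire_space_def by blast
  obtain x where x0: "x \<in> \<sigma> []" and xD: "\<And>n. x \<in> D n"
  proof -
    obtain a where a: "a \<in> \<sigma> []" using A0 by blast
    have "a \<in> X closure_of (\<Inter>n. D n)" using dn a A0t unfolding dense_in_top_def by blast
    then obtain y where "y \<in> (\<Inter>n. D n)" "y \<in> \<sigma> []" using a A0 unfolding in_closure_of by blast
    then show ?thesis using that by blast
  qed
  have xW: "x \<in> Wf n" for n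
  proof -
    have "x \<in> X closure_of \<sigma> []" using x0 A0t closure_of_subset by blast
    then show ?thesis using xD[of n] unfolding D_def C_def by blast
  qed
  define P where "P n = (SOME p. p \<in> T n \<and> x \<in> \<sigma> p)" for n
  have P: "P n \<in> T n \<and> x \<in> \<sigma> (P n)" for n
  proof -
    have "\<exists>p. p \<in> T n \<and> x \<in> \<sigma> p" using xW[of n] unfolding Wf_def by blast
    then show ?thesis unfolding P_def by (rule someI_ex)
  qed
  have uniq: "p = P n" if "p \<in> T n" "x \<in> \<sigma> p" for p n
  proof (rule ccontr)
    assume ne: "p \<noteq> P n"
    have dj: "\<forall>q1\<in>T n. \<forall>q2\<in>T n. q1 \<noteq> q2 \<longrightarrow> \<sigma> q1 \<inter> \<sigma> q2 = {}" using inv[of n] by simp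
    have "\<sigma> p \<inter> \<sigma> (P n) = {}" using dj that(1) P[of n] ne by simp
    then show False using that(2) P[of n] by auto
  qed
  have step: "P (Suc n) = P n @ [last (P (Suc n))]" for n
  proof -
    define q where "q = P (Suc n)"
    have g: "q \<noteq> []" "butlast q \<in> T n" "?L q"
      using gd1[of n] P[of "Suc n"] unfolding q_def by simp_all
    have eq: "q = butlast q @ [last q]" using g(1) by simp
    have "?L (butlast q @ [last q])" using g(3) eq by simp
    then have "last q \<subseteq> \<sigma> (butlast q)" by (simp only: legal_snoc)
    moreover have "\<sigma> q \<subseteq> last q" using S[OF g(3)] g(1) by simp
    moreover have "x \<in> \<sigma> q" using P[of "Suc n"] unfolding q_def by simp
    ultimately have "x \<in> \<sigma> (butlast q)" by blast
    then have "butlast q = P n" using uniq g(2) by simp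
    then show ?thesis using eq unfolding q_def by simp
  qed
  define Bf where "Bf n = last (P (Suc n))" for n
  have Pm: "P n = map Bf [0..<n]" for n
  proof (induction n)
    case 0 show ?case using P[of 0] T0 by simp
  next
    case (Suc n) show ?case using step[of n] Suc by (simp add: Bf_def)
  qed
  have "\<forall>n. ?L (map Bf [0..<n])" using Pm P inv by metis
  then have "(\<Inter>n. Bf n) = {}" using Wn by blast
  moreover have "x \<in> Bf n" for n
  proof -
    have "P (Suc n) \<noteq> []" "?L (P (Suc n))" using P[of "Suc n"] inv[of "Suc n"] by auto
    then show ?thesis using S P[of "Suc n"] unfolding Bf_def by blast
  qed
  ultimately show False by blast
qed


theorem corollary3p3:
  fixes X :: "'a topology"
  assumes "topspace X \<noteq> {}"
  shows "(baire_space X \<longleftrightarrow> \<not> alice_wins_BM X)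
       \<and> (\<not> alice_wins_BM X \<longleftrightarrow> \<not> alice_wins_BM_fin X)
       \<and> (\<not> alice_wins_BM_fin X \<longleftrightarrow> \<not> alice_wins_BM_omega X)"
proof -
  have a: "alice_wins_BM X \<Longrightarrow> \<not> baire_space X"
    using baire_no_win unfolding alice_wins_BM_def by blast
  have b: "\<not> baire_space X \<Longrightarrow> alice_wins_BM_omega X" by (rule notbaire_to_omega)
  have c: "alice_wins_BM_omega X \<Longrightarrow> alice_wins_BM_fin X"
    unfolding alice_wins_BM_omega_def alice_wins_BM_fin_def using omega_to_fin by blast
  have d: "alice_wins_BM_fin X \<Longrightarrow> alice_wins_BM X"
    unfolding alice_wins_BM_fin_def using fin_to_bm by blast
  show ?thesis using a b c d by blast
qed

end
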